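(* Let $V$ be a vector configuration and $W\subseteq V$ a subconfiguration such that $\operatorname{lin}(W)\cap V=W$ (i.e. the elements of $V$ lying in $\operatorname{lin}(W)$ are exactly those of $W$). Then $\mathrm{DD}(V)\ge\mathrm{DD}(W)+\mathrm{DD}(V/W)$.
   Context: A vector configuration is a finite family (repetitions allowed) $V$ of vectors in $\mathbb{R}^r$; a subconfiguration is a subfamily, and cardinalities count multiplicities. The quotient $V/W$ is the vector configuration in $\mathbb{R}^r/\operatorname{lin}(W)$ formed by the images of the elements of $V\setminus W$ under the canonical projection. Covector discrepancy: for a configuration $U$ in a real vector space $E$, $\mathrm{DD}(U)=\max_f\big|\,|\{u\in U: f(u)>0\}|-|\{u\in U:f(u)<0\}|\,\big|$ over all linear functionals $f$ on $E$. *)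

theory Defs
  imports "HOL-Analysis.Analysis"
begin

text \<open>A vector configuration is a finite family (repetitions allowed), represented
  as a finite index set I together with a map v from indices to vectors.
  A subconfiguration is given by a subset J of the index set.\<close>

definition disc :: "('i \<Rightarrow> 'a) \<Rightarrow> 'i set \<Rightarrow> ('a \<Rightarrow> real) \<Rightarrow> nat" where
  "disc v I f = nat \<bar>int (card {i \<in> I. f (v i) > 0}) - int (card {i \<in> I. f (v i) < 0})\<bar>"

definition DD :: "('i \<Rightarrow> 'a::real_vector) \<Rightarrow> 'i set \<Rightarrow> nat" where
  "DD v I = Max {disc v I f | f. linear f}"

text \<open>The quotient lives in 'a / lin(W); linear functionals on
  that quotient correspond exactly to linear functionals on 'a vanishing on lin(W),
  and the quotient configuration consists of the images of v i for i in I - J.\<close>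
definition DD_quot :: "('i \<Rightarrow> 'a::real_vector) \<Rightarrow> 'i set \<Rightarrow> 'i set \<Rightarrow> nat" where
  "DD_quot v I J = Max {disc v (I - J) f | f. linear f \<and> (\<forall>x \<in> span (v ` J). f x = 0)}"

end

theory Submission
  imports Defs
begin

definition sc :: "('i \<Rightarrow> 'a) \<Rightarrow> 'i set \<Rightarrow> ('a \<Rightarrow> real) \<Rightarrow> int" where
  "sc v I f = int (card {i \<in> I. f (v i) > 0}) - int (card {i \<in> I. f (v i) < 0})"

lemma disc_sc: "disc v I f = nat \<bar>sc v I f\<bar>"
  by (simp add: disc_def sc_def)

lemma card_split_aux:
  assumes "finite X"
  shows "card {i \<in> X. Q i} = card {i \<in> {i\<in>X. P i}. Q i} + card {i \<in> {i\<in>X. \<not> P i}. Q i}"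
proof -
  have "{i \<in> X. Q i} = {i \<in> {i\<in>X. P i}. Q i} \<union> {i \<in> {i\<in>X. \<not> P i}. Q i}" by auto
  moreover have "{i \<in> {i\<in>X. P i}. Q i} \<inter> {i \<in> {i\<in>X. \<not> P i}. Q i} = {}" by auto
  ultimately show ?thesis using assms by (simp add: card_Un_disjoint)
qed

lemma sc_split:
  assumes "finite X"
  shows "sc v X f = sc v {i\<in>X. P i} f + sc v {i\<in>X. \<not> P i} f"
proof -
  have a: "card {i\<in>X. 0<f(v i)} = card {i\<in>{i\<in>X. P i}. 0<f(v i)} + card {i\<in>{i\<in>X. \<not>P i}. 0<f(v i)}"
    by (rule card_split_aux[OF assms])
  have b: "card {i\<in>X. f(v i) < 0} = card {i\<in>{i\<in>X. P i}. f(v i) < 0} + card {i\<in>{i\<in>X. \<not>P i}. f(v i) < 0}"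
    by (rule card_split_aux[OF assms])
  show ?thesis unfolding sc_def a b by simp
qed

lemma sc_cong:
  assumes "\<forall>i\<in>X. sgn (f (v i)) = sgn (g (v i))"
  shows "sc v X f = sc v X g"
proof -
  have "\<forall>i\<in>X. (f (v i) > 0 \<longleftrightarrow> g (v i) > 0) \<and> (f (v i) < 0 \<longleftrightarrow> g (v i) < 0)"
    using assms by (metis sgn_greater sgn_less)
  hence "{i \<in> X. f (v i) > 0} = {i \<in> X. g (v i) > 0}" "{i \<in> X. f (v i) < 0} = {i \<in> X. g (v i) < 0}"
    by auto
  thus ?thesis by (simp add: sc_def)
qed

lemma sc_zero:
  assumes "\<forall>i\<in>X. f (v i) = 0"
  shows "sc v X f = 0"
proof -
  have "{i \<in> X. f (v i) > 0} = {}" "{i \<in> X. f (v i) < 0} = {}" using assms by auto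
  thus ?thesis unfolding sc_def by (simp only: card.empty)
qed

lemma sc_neg: "sc v X (\<lambda>x. - f x) = - sc v X f"
  by (simp add: sc_def)

lemma perturb:
  fixes g k :: "'a \<Rightarrow> real"
  assumes "finite P"
  shows "\<exists>t>0. \<forall>w\<in>P. g w \<noteq> 0 \<longrightarrow> sgn (g w + t * k w) = sgn (g w)"
proof -
  define T where "T = insert 1 ((\<lambda>w. \<bar>g w\<bar> / (\<bar>k w\<bar> + 1)) ` {w\<in>P. g w \<noteq> 0})"
  have fT: "finite T" using assms by (simp add: T_def)
  have Tpos: "\<forall>x\<in>T. x > 0" unfolding T_def by (auto intro!: divide_pos_pos)
  define t where "t = Min T"
  have tpos: "t > 0" using fT Tpos unfolding t_def by (simp add: T_def)
  show ?thesis
  proof (intro exI conjI ballI impI)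
    show "t > 0" by fact
    fix w assume w: "w \<in> P" "g w \<noteq> 0"
    have "t \<le> \<bar>g w\<bar> / (\<bar>k w\<bar> + 1)" unfolding t_def using fT w by (auto simp: T_def)
    hence "t * (\<bar>k w\<bar> + 1) \<le> \<bar>g w\<bar>" by (simp add: pos_le_divide_eq add_pos_nonneg)
    hence "\<bar>t * k w\<bar> < \<bar>g w\<bar>" using tpos by (simp add: abs_mult algebra_simps)
    thus "sgn (g w + t * k w) = sgn (g w)"
      by (cases "g w > 0") (auto simp: sgn_if abs_if split: if_splits)
  qed
qed

lemma exists_sep:
  fixes S :: "(real ^ 'n) set"
  assumes "finite U" "\<forall>u\<in>U. u \<notin> span S"
  shows "\<exists>k::real^'n \<Rightarrow> real. linear k \<and> (\<forall>x\<in>span S. k x = 0) \<and> (\<forall>u\<in>U. k u \<noteq> 0)"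
  using assms
proof (induction U rule: finite_induct)
  case empty
  show ?case by (intro exI[of _ "\<lambda>x. 0"]) (auto simp: linear_iff)
next
  case (insert u U)
  have "\<forall>u\<in>U. u \<notin> span S" using insert.prems by blast
  from insert.IH[OF this] obtain k :: "real^'n \<Rightarrow> real" where k: "linear k" "\<forall>x\<in>span S. k x = 0" "\<forall>u\<in>U. k u \<noteq> 0"
    by blast
  show ?case
  proof (cases "k u = 0")
    case False thus ?thesis using k by auto
  next
    case True
    obtain y z where yz: "y \<in> span S" "\<And>w. w \<in> span S \<Longrightarrow> orthogonal z w" "u = y + z"
      using orthogonal_subspace_decomp_exists by blast
    have "z \<noteq> 0" using yz insert.prems by auto
    have zu: "z \<bullet> u = z \<bullet> z" using yz(1,3) yz(2)[of y] by (simp add: inner_add_right orthogonal_def)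
    hence zu0: "z \<bullet> u \<noteq> 0" using \<open>z \<noteq> 0\<close> by simp
    obtain t where t: "t > 0" "\<forall>w\<in>U. k w \<noteq> 0 \<longrightarrow> sgn (k w + t * (z \<bullet> w)) = sgn (k w)"
      using perturb[OF insert.hyps(1), of k "\<lambda>w. z \<bullet> w"] by blast
    define k' where "k' = (\<lambda>x. k x + t * (z \<bullet> x))"
    have "linear k'" using k(1) unfolding k'_def linear_iff
      by (simp add: inner_add_right algebra_simps)
    moreover have "\<forall>x\<in>span S. k' x = 0" unfolding k'_def using k(2) yz(2)
      by (simp add: orthogonal_def)
    moreover have "\<forall>w\<in>insert u U. k' w \<noteq> 0"
    proof
      fix w assume "w \<in> insert u U"
      then consider "w = u" | "w \<in> U" by auto
      thus "k' w \<noteq> 0"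
      proof cases
        case 1 thus ?thesis using True zu0 t(1) by (simp add: k'_def)
      next
        case 2 thus ?thesis using t(2) k(3) unfolding k'_def by (metis sgn_eq_0_iff)
      qed
    qed
    ultimately show ?thesis by blast
  qed
qed

lemma disc_le_card: "finite I \<Longrightarrow> disc v I f \<le> card I"
proof -
  assume f: "finite I"
  have "card {i \<in> I. f (v i) > 0} \<le> card I" "card {i \<in> I. f (v i) < 0} \<le> card I"
    using f by (auto intro: card_mono)
  thus ?thesis by (simp add: disc_def)
qed

lemma DD_props:
  fixes v :: "'i \<Rightarrow> 'a::real_vector"
  assumes "finite I"
  shows "\<And>f. linear f \<Longrightarrow> disc v I f \<le> DD v I" "\<exists>f. linear f \<and> disc v I f = DD v I"
proof -
  let ?A = "{disc v I f | f. linear f}"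
  have fin: "finite ?A" by (rule finite_subset[of _ "{..card I}"]) (auto simp: disc_le_card assms)
  have ne: "?A \<noteq> {}" proof -
    have "linear (\<lambda>x::'a. 0::real)" by (simp add: linear_iff)
    thus ?thesis by blast
  qed
  show "\<And>f. linear f \<Longrightarrow> disc v I f \<le> DD v I" unfolding DD_def using fin by (auto intro!: Max_ge)
  show "\<exists>f. linear f \<and> disc v I f = DD v I" unfolding DD_def using Max_in[OF fin ne] by auto
qed

lemma DDq_props:
  fixes v :: "'i \<Rightarrow> 'a::real_vector"
  assumes "finite I"
  shows "\<And>f. linear f \<Longrightarrow> (\<forall>x \<in> span (v ` J). f x = 0) \<Longrightarrow> disc v (I - J) f \<le> DD_quot v I J"
    "\<exists>f. linear f \<and> (\<forall>x \<in> span (v ` J). f x = 0) \<and> disc v (I - J) f = DD_quot v I J"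
proof -
  let ?A = "{disc v (I - J) f | f. linear f \<and> (\<forall>x \<in> span (v ` J). f x = 0)}"
  have fin: "finite ?A" by (rule finite_subset[of _ "{..card (I - J)}"]) (auto simp: disc_le_card assms)
  have ne: "?A \<noteq> {}" proof -
    have "linear (\<lambda>x::'a. 0::real)" by (simp add: linear_iff)
    thus ?thesis by blast
  qed
  show "\<And>f. linear f \<Longrightarrow> (\<forall>x \<in> span (v ` J). f x = 0) \<Longrightarrow> disc v (I - J) f \<le> DD_quot v I J"
    unfolding DD_quot_def using fin by (auto intro!: Max_ge)
  show "\<exists>f. linear f \<and> (\<forall>x \<in> span (v ` J). f x = 0) \<and> disc v (I - J) f = DD_quot v I J"
    unfolding DD_quot_def using Max_in[OF fin ne] by auto
qed


lemma sign_choice: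
  fixes f0 :: "'a::real_vector \<Rightarrow> real"
  assumes "linear f0"
  shows "\<exists>f. linear f \<and> sc v X f = \<bar>sc v X f0\<bar> \<and> (\<forall>x. f0 x = 0 \<longrightarrow> f x = 0)
     \<and> (\<forall>x. f0 x \<noteq> 0 \<longrightarrow> f x \<noteq> 0)"
proof (cases "sc v X f0 \<ge> 0")
  case True thus ?thesis using assms by (intro exI[of _ f0]) auto
next
  case False
  have "linear (\<lambda>x. - f0 x)" using assms by (simp add: linear_iff)
  thus ?thesis using False by (intro exI[of _ "\<lambda>x. - f0 x"]) (auto simp: sc_neg)
qed

theorem mainTheorem11:
  fixes v :: "'i \<Rightarrow> real ^ 'n" and I J :: "'i set"
  assumes "finite I"
    and "J \<subseteq> I"
    and "\<forall>i \<in> I. v i \<in> span (v ` J) \<longrightarrow> i \<in> J"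
  shows "DD v I \<ge> DD v J + DD_quot v I J"
proof -
  have fJ: "finite J" using assms(1,2) finite_subset by blast
  have fIJ: "finite (I - J)" using assms(1) by simp
  obtain f0 where f0: "linear f0" "disc v J f0 = DD v J" using DD_props(2)[OF fJ] by blast
  obtain f where f: "linear f" "sc v J f = \<bar>sc v J f0\<bar>" using sign_choice[OF f0(1)] by blast
  have scf: "sc v J f = int (DD v J)" using f(2) f0(2) by (simp add: disc_sc)
  obtain g0 where g0: "linear g0" "\<forall>x \<in> span (v ` J). g0 x = 0" "disc v (I - J) g0 = DD_quot v I J"
    using DDq_props(2)[OF assms(1)] by blast
  obtain g where g: "linear g" "sc v (I - J) g = \<bar>sc v (I - J) g0\<bar>" "\<forall>x. g0 x = 0 \<longrightarrow> g x = 0"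
    using sign_choice[OF g0(1)] by blast
  have scg: "sc v (I - J) g = int (DD_quot v I J)" using g(2) g0(3) by (simp add: disc_sc)
  have gS: "\<forall>x \<in> span (v ` J). g x = 0" using g(3) g0(2) by blast
  have "\<forall>u\<in>v ` (I - J). u \<notin> span (v ` J)" using assms(3) by blast
  from exists_sep[OF _ this] obtain k0 :: "real^'n \<Rightarrow> real" where
    k0: "linear k0" "\<forall>x\<in>span (v ` J). k0 x = 0" "\<forall>u\<in>v ` (I - J). k0 u \<noteq> 0"
    using fIJ by blast
  define Z where "Z = {i \<in> I - J. \<not> g (v i) \<noteq> 0}"
  obtain k where k: "linear k" "sc v Z k = \<bar>sc v Z k0\<bar>" "\<forall>x. k0 x = 0 \<longrightarrow> k x = 0"
      "\<forall>x. k0 x \<noteq> 0 \<longrightarrow> k x \<noteq> 0"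
    using sign_choice[OF k0(1)] by blast
  obtain t where t: "t > 0" "\<forall>w\<in>v ` (I - J). g w \<noteq> 0 \<longrightarrow> sgn (g w + t * k w) = sgn (g w)"
    using perturb[of "v ` (I - J)" g k] fIJ by blast
  define g' where "g' = (\<lambda>x. g x + t * k x)"
  have g'lin: "linear g'" using g(1) k(1) unfolding g'_def linear_iff by (simp add: algebra_simps)
  have g'S: "\<forall>x \<in> span (v ` J). g' x = 0" using gS k0(2) k(3) unfolding g'_def by simp
  have g'nz: "\<forall>i \<in> I - J. g' (v i) \<noteq> 0"
  proof
    fix i assume i: "i \<in> I - J"
    show "g' (v i) \<noteq> 0"
    proof (cases "g (v i) = 0")
      case True thus ?thesis using k0(3) k(4) i t(1) unfolding g'_def by auto
    next
      case False thus ?thesis using t(2) i unfolding g'_def by (metis image_eqI sgn_eq_0_iff)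
    qed
  qed
  have "sc v (I - J) g' = sc v {i \<in> I - J. g (v i) \<noteq> 0} g' + sc v Z g'"
    unfolding Z_def by (rule sc_split[OF fIJ])
  also have "sc v {i \<in> I - J. g (v i) \<noteq> 0} g' = sc v {i \<in> I - J. g (v i) \<noteq> 0} g"
    by (rule sc_cong) (use t(2) in \<open>auto simp: g'_def\<close>)
  also have "sc v Z g' = sc v Z k"
    by (rule sc_cong) (use t(1) in \<open>auto simp: g'_def Z_def sgn_mult\<close>)
  finally have "sc v (I - J) g' = sc v {i \<in> I - J. g (v i) \<noteq> 0} g + sc v Z k" .
  moreover have "sc v (I - J) g = sc v {i \<in> I - J. g (v i) \<noteq> 0} g + sc v Z g"
    unfolding Z_def by (rule sc_split[OF fIJ])
  moreover have "sc v Z g = 0" by (rule sc_zero) (auto simp: Z_def)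
  ultimately have scg': "sc v (I - J) g' \<ge> int (DD_quot v I J)" using scg k(2) by simp
  obtain s where s: "s > 0" "\<forall>w\<in>v ` (I - J). g' w \<noteq> 0 \<longrightarrow> sgn (g' w + s * f w) = sgn (g' w)"
    using perturb[of "v ` (I - J)" g' f] fIJ by blast
  define h where "h = (\<lambda>x. g' x + s * f x)"
  have hlin: "linear h" using g'lin f(1) unfolding h_def linear_iff by (simp add: algebra_simps)
  have "sc v I h = sc v {i \<in> I. i \<in> J} h + sc v {i \<in> I. i \<notin> J} h"
    by (rule sc_split[OF assms(1)])
  moreover have "{i \<in> I. i \<in> J} = J" "{i \<in> I. i \<notin> J} = I - J" using assms(2) by auto
  moreover have "sc v J h = sc v J f"
  proof (rule sc_cong, intro ballI)
    fix i assume "i \<in> J"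
    hence "v i \<in> span (v ` J)" by (simp add: span_base)
    hence "h (v i) = s * f (v i)" using g'S by (simp add: h_def)
    thus "sgn (h (v i)) = sgn (f (v i))" using s(1) by (simp add: sgn_mult)
  qed
  moreover have "sc v (I - J) h = sc v (I - J) g'"
    by (rule sc_cong) (use s(2) g'nz in \<open>auto simp: h_def\<close>)
  ultimately have "sc v I h \<ge> int (DD v J) + int (DD_quot v I J)" using scf scg' by simp
  hence "disc v I h \<ge> DD v J + DD_quot v I J" by (simp add: disc_sc)
  moreover have "disc v I h \<le> DD v I" by (rule DD_props(1)[OF assms(1) hlin])
  ultimately show ?thesis by simp
qed

end
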